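(* Let $F(y) = \frac{1}{\sqrt{\pi}} \int_{-y}^{y} e^{-x^2}\,dx$ for $y \ge 0$. Then, as $n \to \infty$, \[ \int_0^\infty (1 - F(y))^n \, dy = \frac{\sqrt{\pi}}{2(n+1)} + o(n^{-2}). \]
   Context: $F$ is the distribution function of $|Z|$ where $Z$ is a centered normal random variable with variance $1/2$. *)

theory Defs
  imports "HOL-Analysis.Analysis" "HOL-Library.Landau_Symbols"
begin

text \<open>Distribution function of |Z|, Z ~ N(0,1/2):
  F y = (1/sqrt pi) * integral over [-y,y] of exp(-x^2), for y >= 0.\<close>
definition absnormF :: "real \<Rightarrow> real" where
  "absnormF y = (1 / sqrt pi) * integral {-y..y} (\<lambda>x. exp (- (x^2)))"

end

theory Submission
  imports Defs "HOL-Probability.Probability"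
begin

lemma has_integral_to_inf_bounded:
  fixes h ::"real \<Rightarrow> real"
  assumes int: "\<And>y::real. h integrable_on {a..y}"
    and bnd: "\<And>y. integral {a..y} h \<le> M"
    and nonneg: "\<And>y. y \<ge> a \<Longrightarrow> h y \<ge> 0"
  shows "h integrable_on {a..} \<and> integral {a..} h \<le> M"
proof -
  define f where "f \<equiv> \<lambda>n x. if x \<in> {a..of_nat n} then h x else 0"
  have has_integral_f: "\<And>n. (f n has_integral (integral {a..of_nat n} h)) {a..}"
    unfolding f_def
    by (metis (no_types, lifting) ext Icc_subset_Ici_iff order.refl
        has_integral_restrict int integrable_integral)
  have ge: "integral {a..y} h \<ge> 0" for y
    by (meson Henstock_Kurzweil_Integration.integral_nonneg atLeastAtMost_iff int nonneg)
  have *: "h integrable_on {a..} \<and> (\<lambda>n. integral {a..} (f n)) \<longlonglongrightarrow> integral {a..} h"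
  proof (intro monotone_convergence_increasing allI ballI)
    fix n
    show "f n integrable_on {a..}"
      using has_integral_f by blast
  next
    fix n x
    show "f n x \<le> f (Suc n) x" using nonneg by (auto simp: f_def)
  next
    fix x :: real assume x: "x \<in> {a..}"
    have "eventually (\<lambda>n. real n \<ge> x) at_top"
      by (meson eventually_sequentiallyI nat_ceiling_le_eq)
    with x have "eventually (\<lambda>n. f n x = h x) at_top"
      by (simp add: eventually_mono f_def)
    thus "(\<lambda>n. f n x) \<longlonglongrightarrow> h x" by (simp add: tendsto_eventually)
  next
    have "norm (integral {a..} (f n)) \<le> M" for n
      using has_integral_f[of n] ge[of "real n"] bnd[of "real n"] by (simp add: integral_unique)
    thus "bounded (range(\<lambda>k. integral {a..} (f k)))"
      by (metis (no_types, lifting) boundedI rangeE)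
  qed
  moreover have "integral {a..} h \<le> M"
  proof (rule tendsto_upperbound[OF conjunct2[OF *]])
    show "\<forall>\<^sub>F n in sequentially. integral {a..} (f n) \<le> M"
      using has_integral_f bnd by (intro always_eventually) (metis integral_unique)
  qed simp
  ultimately show ?thesis by blast
qed

definition eg :: "real \<Rightarrow> real" where "eg x = exp (- (x^2))"

lemma cont_eg: "continuous_on S eg" unfolding eg_def by (intro continuous_intros)

lemma absnormF_eq: assumes "y \<ge> 0" shows "absnormF y = (2 / sqrt pi) * integral {0..y} eg"
proof -
  have i: "eg integrable_on {-y..y}" by (intro integrable_continuous_real cont_eg)
  have "integral {-y..y} eg = integral {-y..0} eg + integral {0..y} eg"
    using Henstock_Kurzweil_Integration.integral_combine[OF _ _ i, of 0] assms by simp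
  moreover have "integral {-y..0} eg = integral {0..y} eg"
  proof -
    have "integral {-y..-0} (\<lambda>x. eg (-x)) = integral {0..y} eg" using Henstock_Kurzweil_Integration.integral_reflect_real[of y 0 eg] by simp
    moreover have "(\<lambda>x. eg (-x)) = eg" by (auto simp: eg_def)
    ultimately show ?thesis by simp
  qed
  ultimately show ?thesis unfolding absnormF_def eg_def[symmetric] by simp
qed

lemma gauss_lim: "((\<lambda>y. integral {0..y} eg) \<longlongrightarrow> sqrt pi / 2) at_top"
proof -
  have hb: "has_bochner_integral lborel (\<lambda>x. indicator {0..} x *\<^sub>R eg x) (sqrt pi / 2)"
    using gaussian_moment_0 unfolding eg_def by (simp add: power2_eq_square)
  have si: "set_integrable lborel {0..} eg"
    using hb unfolding set_integrable_def by (simp add: has_bochner_integral_iff)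
  have v: "set_lebesgue_integral lborel {0..} eg = sqrt pi / 2"
    using hb unfolding set_lebesgue_integral_def by (simp add: has_bochner_integral_iff)
  have "((\<lambda>b. set_lebesgue_integral lborel {0..b} eg) \<longlongrightarrow> set_lebesgue_integral lborel {0..} eg) at_top"
    by (rule tendsto_set_lebesgue_integral_at_top[OF _ si]) simp
  moreover have "set_lebesgue_integral lborel {0..b} eg = integral {0..b} eg" for b
    by (rule set_borel_integral_eq_integral(2)[OF borel_integrable_atLeastAtMost'[OF cont_eg]])
  ultimately show ?thesis using v by simp
qed

definition bb :: real where "bb = 2 / sqrt pi"
definition G :: "real \<Rightarrow> real" where "G y = 1 - bb * integral {0..y} eg"

lemma bb_pos: "bb > 0" unfolding bb_def by simp

lemma G_deriv: "0 \<le> x \<Longrightarrow> x \<le> c \<Longrightarrow> (G has_real_derivative -(bb * eg x)) (at x within {0..c})"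
  unfolding G_def
  by (auto intro!: derivative_eq_intros integral_has_real_derivative cont_eg)

lemma G_lim: "(G \<longlongrightarrow> 0) at_top"
proof -
  have "((\<lambda>y. 1 - bb * integral {0..y} eg) \<longlongrightarrow> 1 - bb * (sqrt pi / 2)) at_top"
    by (intro tendsto_intros gauss_lim)
  moreover have "1 - bb * (sqrt pi / 2) = 0" unfolding bb_def by simp
  ultimately show ?thesis unfolding G_def[abs_def] by simp
qed

lemma eg_nonneg: "0 \<le> eg x" unfolding eg_def by simp

lemma G_nonneg: assumes "0 \<le> y" shows "0 \<le> G y"
proof -
  have "integral {0..y} eg \<le> sqrt pi / 2"
  proof (rule tendsto_lowerbound[OF gauss_lim])
    show "\<forall>\<^sub>F z in at_top. integral {0..y} eg \<le> integral {0..z} eg"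
      using eventually_ge_at_top[of y]
      by eventually_elim (intro integral_subset_le integrable_continuous_real cont_eg, auto simp: eg_nonneg)
  qed simp
  then have "bb * integral {0..y} eg \<le> bb * (sqrt pi / 2)" using bb_pos by simp
  also have "\<dots> = 1" unfolding bb_def by simp
  finally show ?thesis unfolding G_def by simp
qed

lemma exp_int: fixes lo hi c :: real assumes "lo \<le> hi" "c > 0"
  shows "((\<lambda>x. exp(-c*x)) has_integral ((exp(-c*lo) - exp(-c*hi))/c)) {lo..hi}"
proof -
  have "((\<lambda>x. exp(-c*x)) has_integral ((-exp(-c*hi)/c) - (-exp(-c*lo)/c))) {lo..hi}"
    using assms
    using assms
    by (intro fundamental_theorem_of_calculus[of lo hi "\<lambda>x. -exp(-c*x)/c"])
       (auto intro!: derivative_eq_intros simp flip: has_real_derivative_iff_has_vector_derivative)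
  then show ?thesis by (simp add: diff_divide_distrib)
qed

lemma G_le_exp: assumes "0 \<le> y" shows "G y \<le> exp (- bb * y)"
proof (cases "y \<le> bb")
  case True
  have "integral {0..y} (\<lambda>x. exp(-bb*x)) \<le> integral {0..y} eg"
  proof (rule integral_le)
    show "(\<lambda>x. exp(-bb*x)) integrable_on {0..y}" using exp_int[OF assms bb_pos] by blast
    show "eg integrable_on {0..y}" by (intro integrable_continuous_real cont_eg)
    fix x assume x: "x \<in> {0..y}"
    then have "x^2 \<le> bb * x" using True by (auto simp: power2_eq_square intro: mult_right_mono)
    then show "exp(-bb*x) \<le> eg x" unfolding eg_def by simp
  qed
  then have "(1 - exp(-bb*y))/bb \<le> integral {0..y} eg"
    using integral_unique[OF exp_int[OF assms bb_pos]] by simp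
  then have "1 - exp(-bb*y) \<le> bb * integral {0..y} eg" using bb_pos by (simp add: field_simps)
  then show ?thesis unfolding G_def by simp
next
  case False
  have key: "G y - exp (- bb * y) \<le> G z - exp (- bb * z)" if z: "z \<ge> y" for z
  proof -
    have ie: "eg integrable_on {0..z}" by (intro integrable_continuous_real cont_eg)
    have sp: "integral {0..z} eg = integral {0..y} eg + integral {y..z} eg"
      using Henstock_Kurzweil_Integration.integral_combine[OF _ _ ie, of y] assms z by simp
    have "integral {y..z} eg \<le> integral {y..z} (\<lambda>x. exp(-bb*x))"
    proof (rule integral_le)
      show "(\<lambda>x. exp(-bb*x)) integrable_on {y..z}" using exp_int[OF z bb_pos] by blast
      show "eg integrable_on {y..z}" by (intro integrable_continuous_real cont_eg)
      fix x assume x: "x \<in> {y..z}"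
      then have "bb \<le> x" "0 \<le> x" using False assms by auto
      then have "bb * x \<le> x^2" unfolding power2_eq_square by (rule mult_right_mono)
      then show "eg x \<le> exp(-bb*x)" unfolding eg_def by simp
    qed
    also have "\<dots> = (exp(-bb*y) - exp(-bb*z))/bb" using integral_unique[OF exp_int[OF z bb_pos]] .
    finally have "bb * integral {y..z} eg \<le> exp(-bb*y) - exp(-bb*z)" using bb_pos by (simp add: field_simps)
    then show ?thesis unfolding G_def sp by (simp add: algebra_simps)
  qed
  have "((\<lambda>z. G z - exp (- bb * z)) \<longlongrightarrow> 0 - 0) at_top"
    by (intro tendsto_intros G_lim) (use bb_pos in real_asymp)
  then have "G y - exp (- bb * y) \<le> 0 - 0"
    by (rule tendsto_lowerbound) (use key eventually_mono[OF eventually_ge_at_top[of y]] in auto)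
  then show ?thesis by simp
qed

lemma G_cont: "continuous_on {0..y} G"
  by (rule DERIV_continuous_on[OF G_deriv]) auto

lemma partA: "((\<lambda>y. G y ^ n * eg y) has_integral (sqrt pi / (2 * (real n + 1)))) {0..}"
proof -
  define P where "P y = -(G y ^ (n+1)) / ((real n + 1) * bb)" for y
  have "((\<lambda>y. G y ^ n * eg y) has_integral (0 - P 0)) {0..}"
  proof (rule has_integral_to_inf)
    show "(\<lambda>y. G y ^ n * eg y) integrable_on {0..y}" for y
      by (intro integrable_continuous_real continuous_intros G_cont cont_eg)
    show "0 \<le> G y ^ n * eg y" if "0 \<le> y" for y
      using G_nonneg[OF that] eg_nonneg by simp
    have fi: "integral {0..y} (\<lambda>y. G y ^ n * eg y) = P y - P 0" if y: "0 \<le> y" for y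
    proof (rule integral_unique, rule fundamental_theorem_of_calculus[OF y])
      fix x assume x: "x \<in> {0..y}"
      have "(P has_real_derivative (-(of_nat (n+1) * ((-(bb * eg x)) * G x ^ (n + 1 - Suc 0)))) / ((real n + 1) * bb)) (at x within {0..y})"
        unfolding P_def[abs_def]
        by (rule DERIV_cdivide, rule DERIV_minus, rule DERIV_power, rule G_deriv) (use x in auto)
      moreover have "(-(of_nat (n+1) * ((-(bb * eg x)) * G x ^ (n + 1 - Suc 0)))) / ((real n + 1) * bb) = G x ^ n * eg x"
      proof -
        have nz: "(real n + 1) * bb \<noteq> 0" using bb_pos by simp
        have "(-(of_nat (n+1) * ((-(bb * eg x)) * G x ^ (n + 1 - Suc 0)))) = ((real n + 1) * bb) * (G x ^ n * eg x)"
          by (simp add: algebra_simps)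
        then show ?thesis using nz by (metis nonzero_mult_div_cancel_left)
      qed
      ultimately have "(P has_real_derivative (G x ^ n * eg x)) (at x within {0..y})" by simp
      then show "(P has_vector_derivative (G x ^ n * eg x)) (at x within {0..y})"
        by (simp add: has_real_derivative_iff_has_vector_derivative)
    qed
    have "(P \<longlongrightarrow> -(0 ^ (n+1)) / ((real n + 1) * bb)) at_top"
      unfolding P_def[abs_def] by (intro tendsto_intros G_lim) (use bb_pos in simp)
    then have "((\<lambda>y. P y - P 0) \<longlongrightarrow> 0 - P 0) at_top" by (intro tendsto_intros) simp
    then show "((\<lambda>y. integral {0..y} (\<lambda>y. G y ^ n * eg y)) \<longlongrightarrow> 0 - P 0) at_top"
      by (rule Lim_transform_eventually) (use fi in \<open>auto intro: eventually_mono[OF eventually_ge_at_top[of 0]]\<close>)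
  qed
  moreover have "0 - P 0 = sqrt pi / (2 * (real n + 1))"
    unfolding P_def G_def bb_def by (simp add: field_simps)
  ultimately show ?thesis by simp
qed

lemma dom_int: fixes c y :: real assumes c: "c > 0" shows "integral {0..y} (\<lambda>x. x^2 * exp (-c*x)) \<le> 2 / c^3"
proof (cases "0 \<le> y")
  case False then show ?thesis using c by simp
next
  case y: True
  define Q where "Q x = -exp(-c*x) * (x^2/c + 2*x/c^2 + 2/c^3)" for x
  have "((\<lambda>x. x^2 * exp (-c*x)) has_integral (Q y - Q 0)) {0..y}"
  proof (rule fundamental_theorem_of_calculus[OF y])
    fix x assume x: "x \<in> {0..y}"
    have "(Q has_real_derivative x^2 * exp (-c*x)) (at x within {0..y})"
      unfolding Q_def[abs_def] using c
      by (auto intro!: derivative_eq_intros simp: field_simps power2_eq_square power3_eq_cube)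
    then show "(Q has_vector_derivative x^2 * exp (-c*x)) (at x within {0..y})"
      by (simp add: has_real_derivative_iff_has_vector_derivative)
  qed
  then have "integral {0..y} (\<lambda>x. x^2 * exp (-c*x)) = Q y - Q 0" by (rule integral_unique)
  moreover have "Q y \<le> 0" unfolding Q_def using c y by (auto intro!: mult_nonneg_nonneg add_nonneg_nonneg)
  moreover have "Q 0 = - 2 / c^3" unfolding Q_def by simp
  ultimately show ?thesis by simp
qed

lemma partB: assumes n: "n \<ge> 1"
  shows "(\<lambda>y. G y ^ n * (1 - eg y)) integrable_on {0..} \<and>
         integral {0..} (\<lambda>y. G y ^ n * (1 - eg y)) \<le> 2 / (real n * bb)^3"
proof (rule has_integral_to_inf_bounded)
  have c: "real n * bb > 0" using n bb_pos by simp
  show "(\<lambda>y. G y ^ n * (1 - eg y)) integrable_on {0..y}" for y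
    by (intro integrable_continuous_real continuous_intros G_cont cont_eg)
  have pw: "G x ^ n * (1 - eg x) \<le> x^2 * exp (-(real n * bb) * x)" if x: "0 \<le> x" for x
  proof -
    have "G x ^ n \<le> exp (- bb * x) ^ n"
      by (rule power_mono[OF G_le_exp[OF x] G_nonneg[OF x]])
    also have "\<dots> = exp (-(real n * bb) * x)"
      by (simp add: exp_of_nat_mult[symmetric])
    finally have a: "G x ^ n \<le> exp (-(real n * bb) * x)" .
    have b: "1 - eg x \<le> x^2" unfolding eg_def using exp_ge_add_one_self[of "-(x^2)"] by simp
    have b0: "0 \<le> 1 - eg x" unfolding eg_def by simp
    show ?thesis using mult_mono[OF a b] b0 G_nonneg[OF x] by (simp add: mult.commute)
  qed
  show "0 \<le> G y ^ n * (1 - eg y)" if "0 \<le> y" for y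
    using G_nonneg[OF that] by (simp add: eg_def)
  show "integral {0..y} (\<lambda>y. G y ^ n * (1 - eg y)) \<le> 2 / (real n * bb)^3" for y
  proof -
    have "integral {0..y} (\<lambda>y. G y ^ n * (1 - eg y)) \<le> integral {0..y} (\<lambda>x. x^2 * exp (-(real n * bb)*x))"
      by (intro integral_le pw integrable_continuous_real continuous_intros G_cont cont_eg) auto
    also have "\<dots> \<le> 2 / (real n * bb)^3" by (rule dom_int[OF c])
    finally show ?thesis .
  qed
qed

lemma main_bound: assumes n: "n \<ge> 1"
  shows "\<bar>integral {0..} (\<lambda>y. (1 - absnormF y) ^ n) - sqrt pi / (2 * (real n + 1))\<bar>
           \<le> (2 / bb^3) * (1 / real n ^ 3)"
proof -
  have B: "(\<lambda>y. G y ^ n * (1 - eg y)) integrable_on {0..}"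
     "integral {0..} (\<lambda>y. G y ^ n * (1 - eg y)) \<le> 2 / (real n * bb)^3"
    using partB[OF n] by auto
  have B0: "0 \<le> integral {0..} (\<lambda>y. G y ^ n * (1 - eg y))"
    by (rule integral_nonneg[OF B(1)]) (use G_nonneg in \<open>auto simp: eg_def\<close>)
  have "integral {0..} (\<lambda>y. (1 - absnormF y) ^ n) =
        integral {0..} (\<lambda>y. G y ^ n * eg y + G y ^ n * (1 - eg y))"
  proof (rule integral_cong)
    fix y :: real assume "y \<in> {0..}"
    then have "1 - absnormF y = G y" using absnormF_eq[of y] unfolding G_def bb_def by simp
    have "G y ^ n * eg y + G y ^ n * (1 - eg y) = G y ^ n" by (simp add: algebra_simps)
    then show "(1 - absnormF y) ^ n = G y ^ n * eg y + G y ^ n * (1 - eg y)"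
      using \<open>1 - absnormF y = G y\<close> by simp
  qed
  also have "\<dots> = sqrt pi / (2 * (real n + 1)) + integral {0..} (\<lambda>y. G y ^ n * (1 - eg y))"
    using integral_add[OF has_integral_integrable[OF partA] B(1)] integral_unique[OF partA[of n]] by simp
  finally have eq: "integral {0..} (\<lambda>y. (1 - absnormF y) ^ n) - sqrt pi / (2 * (real n + 1))
      = integral {0..} (\<lambda>y. G y ^ n * (1 - eg y))" by simp
  have "2 / (real n * bb)^3 = (2 / bb^3) * (1 / real n ^ 3)" by (simp add: power_mult_distrib)
  then show ?thesis unfolding eq using B(2) B0 by simp
qed

theorem theorem2:
  shows "(\<lambda>n::nat. integral {0..} (\<lambda>y. (1 - absnormF y) ^ n) - sqrt pi / (2 * (real n + 1)))
           \<in> o(\<lambda>n. 1 / (real n) ^ 2)"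
proof -
  have "(\<lambda>n::nat. integral {0..} (\<lambda>y. (1 - absnormF y) ^ n) - sqrt pi / (2 * (real n + 1)))
           \<in> O(\<lambda>n. 1 / (real n) ^ 3)"
  proof (rule bigoI[of _ "2 / bb^3"])
    show "\<forall>\<^sub>F n in sequentially. norm (integral {0..} (\<lambda>y. (1 - absnormF y) ^ n) - sqrt pi / (2 * (real n + 1)))
           \<le> 2 / bb^3 * norm (1 / (real n) ^ 3)"
      using eventually_ge_at_top[of "1::nat"]
      by eventually_elim (use main_bound in auto)
  qed
  moreover have "(\<lambda>n::nat. 1 / (real n) ^ 3) \<in> o(\<lambda>n. 1 / (real n) ^ 2)" by real_asymp
  ultimately show ?thesis by (rule landau_o.big_small_trans)
qed

end
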